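(* Let $R$ be any BST on $[n]$ (the reference tree). Assign to every BST $T$ on $[n]$ the potential $\phi_R(T)=\sum_{i=1}^n\bigl(-2\min_{j\in T(i)} d_R(j)\bigr)$, where $T(i)$ is the set of keys in the subtree of $T$ rooted at $i$ and $d_R(j)$ is the depth of $j$ in $R$ (root at depth $0$). There is an absolute constant $c$ such that for every BST $T$ on $[n]$ and every key $i$, if splaying $i$ transforms $T$ into $T'$, then $\mathrm{cost}+\phi_R(T')-\phi_R(T)\le c\,(1+d_R(i))$.
   Context: Splaying a key $i$ (Sleator–Tarjan splay tree) brings $i$ to the root by a sequence of zig-zig and zig-zag steps, each consisting of two rotations, possibly followed by one final zig step consisting of a single rotation. Each zig-zig or zig-zag step costs $2$ and a zig step costs $1$. Here $\mathrm{cost}$ denotes the total cost of the splay of $i$ in $T$, i.e. the number of rotations performed, which equals the depth of $i$ in $T$. *)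

theory Defs
  imports Complex_Main "HOL-Library.Tree"
begin

fun dep :: "nat tree \<Rightarrow> nat \<Rightarrow> nat" where
  "dep Leaf x = 0"
| "dep (Node l a r) x =
     (if x < a then Suc (dep l x) else if a < x then Suc (dep r x) else 0)"

fun subtr :: "nat tree \<Rightarrow> nat \<Rightarrow> nat tree" where
  "subtr Leaf x = Leaf"
| "subtr (Node l a r) x =
     (if x < a then subtr l x else if a < x then subtr r x else Node l a r)"

text \<open>Splay for keys at even depth: a sequence of zig-zig / zig-zag steps
  (bottom-up pairs align with the root when the depth is even).\<close>
fun splay_even :: "nat \<Rightarrow> nat tree \<Rightarrow> nat tree" where
  "splay_even x Leaf = Leaf"
| "splay_even x (Node l a r) =
    (if x = a then Node l a r
     else if x < a then
       (case l of Leaf \<Rightarrow> Node l a r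
        | Node ll b lr \<Rightarrow>
           (if x = b then Node l a r
            else if x < b then
              (case splay_even x ll of Leaf \<Rightarrow> Node l a r
               | Node A y B \<Rightarrow> Node A y (Node B b (Node lr a r)))
            else
              (case splay_even x lr of Leaf \<Rightarrow> Node l a r
               | Node A y B \<Rightarrow> Node (Node ll b A) y (Node B a r))))
     else
       (case r of Leaf \<Rightarrow> Node l a r
        | Node rl b rr \<Rightarrow>
           (if x = b then Node l a r
            else if b < x then
              (case splay_even x rr of Leaf \<Rightarrow> Node l a r
               | Node A y B \<Rightarrow> Node (Node (Node l a rl) b A) y B)
            else
              (case splay_even x rl of Leaf \<Rightarrow> Node l a r
               | Node A y B \<Rightarrow> Node (Node l a A) y (Node B b rr)))))"

text \<open>Sleator-Tarjan (bottom-up) splay: if the depth is odd, the final zig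
  step is performed at the root.\<close>
definition splay :: "nat \<Rightarrow> nat tree \<Rightarrow> nat tree" where
  "splay x t =
    (if even (dep t x) then splay_even x t
     else (case t of Leaf \<Rightarrow> Leaf
           | Node l a r \<Rightarrow>
              (if x < a then
                 (case splay_even x l of Leaf \<Rightarrow> t
                  | Node A y B \<Rightarrow> Node A y (Node B a r))
               else
                 (case splay_even x r of Leaf \<Rightarrow> t
                  | Node A y B \<Rightarrow> Node (Node l a A) y B))))"

text \<open>Cost of splaying x in t = number of rotations = depth of x in t.\<close>
definition splay_cost :: "nat \<Rightarrow> nat tree \<Rightarrow> nat" where
  "splay_cost x t = dep t x"

definition bst_on :: "nat \<Rightarrow> nat tree \<Rightarrow> bool" where
  "bst_on n t \<longleftrightarrow> bst t \<and> set_tree t = {1..n}"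

definition phi :: "nat \<Rightarrow> nat tree \<Rightarrow> nat tree \<Rightarrow> int" where
  "phi n R T = (\<Sum>i\<in>{1..n}. - 2 * int (Min ((dep R) ` set_tree (subtr T i))))"

end

theory Submission
  imports Defs
begin

definition conv :: "nat tree \<Rightarrow> nat set \<Rightarrow> bool" where
  "conv R S \<longleftrightarrow> (\<forall>u\<in>S. \<forall>v\<in>S. \<forall>w\<in>set_tree R. u < w \<and> w < v \<longrightarrow> w \<in> S)"

lemma conv_l: "conv (Node l a r) S \<Longrightarrow> conv l S"
  unfolding conv_def tree.set by blast
lemma conv_r: "conv (Node l a r) S \<Longrightarrow> conv r S"
  unfolding conv_def tree.set by blast
lemma conv_a: "conv (Node l a r) S \<Longrightarrow> u \<in> S \<Longrightarrow> v \<in> S \<Longrightarrow> u < a \<Longrightarrow> a < v \<Longrightarrow> a \<in> S"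
  unfolding conv_def tree.set by blast

definition mu :: "nat tree \<Rightarrow> nat tree \<Rightarrow> int" where
  "mu R t = int (Min (dep R ` set_tree t))"

fun pot :: "nat tree \<Rightarrow> nat tree \<Rightarrow> int" where
  "pot R Leaf = 0"
| "pot R (Node l a r) = pot R l + pot R r - 2 * mu R (Node l a r)"

lemma dep_in_l: "bst (Node l a r) \<Longrightarrow> j \<in> set_tree l \<Longrightarrow> dep (Node l a r) j = Suc (dep l j)"
  by auto

lemma dep_in_r: "bst (Node l a r) \<Longrightarrow> j \<in> set_tree r \<Longrightarrow> dep (Node l a r) j = Suc (dep r j)"
  by auto

lemma z: "dep (Node l a r) u = 0 \<longleftrightarrow> u = a"
  by (simp add: not_less_iff_gr_or_eq)

lemma uniq:
  "bst R \<Longrightarrow> conv R S \<Longrightarrow> u \<in> S \<Longrightarrow> v \<in> S \<Longrightarrow> u \<in> set_tree R \<Longrightarrow> v \<in> set_tree R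
   \<Longrightarrow> u < v \<Longrightarrow> dep R u = dep R v \<Longrightarrow> \<exists>w\<in>S \<inter> set_tree R. dep R w < dep R u"
proof (induction R)
  case Leaf
  then show ?case by simp
next
  case (Node l a r)
  have B: "bst l" "bst r" "\<forall>x\<in>set_tree l. x < a" "\<forall>x\<in>set_tree r. a < x" using Node.prems(1) by auto
  have cl: "conv l S" "conv r S" using Node.prems(2) conv_l conv_r by blast+
  show ?case
  proof (cases "u = a \<or> v = a")
    case True
    have False using True z[of l a r u] z[of l a r v] Node.prems(7,8) by auto
    then show ?thesis ..
  next
    case False
    hence ua: "u \<noteq> a" "v \<noteq> a" by auto
    have U: "u \<in> set_tree l \<or> u \<in> set_tree r" "v \<in> set_tree l \<or> v \<in> set_tree r"
      using Node.prems(5,6) ua by auto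
    show ?thesis
    proof (cases "u < a \<and> a < v")
      case True
      hence "a \<in> S" using conv_a[OF Node.prems(2,3,4)] by blast
      moreover have "dep (Node l a r) a = 0" by simp
      moreover have "dep (Node l a r) u \<noteq> 0" using ua z[of l a r u] by simp
      ultimately show ?thesis by auto
    next
      case False
      hence "(u \<in> set_tree l \<and> v \<in> set_tree l) \<or> (u \<in> set_tree r \<and> v \<in> set_tree r)"
        using U B(3,4) \<open>u < v\<close> by (meson less_trans)
      then show ?thesis
      proof
        assume uv: "u \<in> set_tree l \<and> v \<in> set_tree l"
        have h: "u < a" "v < a" using uv B(3) by auto
        have "dep l u = dep l v" using Node.prems(8) h by simp
        then obtain w where w: "w \<in> S" "w \<in> set_tree l" "dep l w < dep l u"
          using Node.IH(1)[OF B(1) cl(1) Node.prems(3,4) _ _ Node.prems(7)] uv by blast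
        have "w < a" using w B(3) by auto
        thus ?thesis using w h by (intro bexI[of _ w]) auto
      next
        assume uv: "u \<in> set_tree r \<and> v \<in> set_tree r"
        have h: "a < u" "a < v" using uv B(4) by auto
        have "dep r u = dep r v" using Node.prems(8) h by simp
        then obtain w where w: "w \<in> S" "w \<in> set_tree r" "dep r w < dep r u"
          using Node.IH(2)[OF B(2) cl(2) Node.prems(3,4) _ _ Node.prems(7)] uv by blast
        have "a < w" using w B(4) by auto
        thus ?thesis using w h by (intro bexI[of _ w]) auto
      qed
    qed
  qed
qed
lemma mu_mono: "set_tree s \<subseteq> set_tree t \<Longrightarrow> s \<noteq> Leaf \<Longrightarrow> mu R t \<le> mu R s"
proof -
  assume a: "set_tree s \<subseteq> set_tree t" "s \<noteq> Leaf"
  have "Min (dep R ` set_tree t) \<le> Min (dep R ` set_tree s)"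
    by (rule Min_antimono) (use a in auto)
  thus ?thesis unfolding mu_def by simp
qed

lemma mu_nonneg: "0 \<le> mu R t" unfolding mu_def by simp

lemma mu_set: "set_tree s = set_tree t \<Longrightarrow> mu R s = mu R t"
  unfolding mu_def by simp

lemma mu_split:
  assumes "bst R" "conv R (set_tree t)" "set_tree t \<subseteq> set_tree R"
    "set_tree A \<subseteq> set_tree t" "set_tree B \<subseteq> set_tree t" "set_tree A \<inter> set_tree B = {}"
    "A \<noteq> Leaf" "B \<noteq> Leaf"
  shows "mu R t < mu R A \<or> mu R t < mu R B"
proof (rule ccontr)
  assume "\<not> ?thesis"
  moreover have "mu R t \<le> mu R A" by (rule mu_mono[OF assms(4,7)])
  moreover have "mu R t \<le> mu R B" by (rule mu_mono[OF assms(5,8)])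
  ultimately have eq: "mu R A = mu R t" "mu R B = mu R t" by auto
  obtain u where u: "u \<in> set_tree A" "dep R u = Min (dep R ` set_tree A)"
  proof -
    have "set_tree A \<noteq> {}" using assms(7) by (cases A) auto
    hence "Min (dep R ` set_tree A) \<in> dep R ` set_tree A" by (intro Min_in) auto
    thus ?thesis using that by auto
  qed
  obtain v where v: "v \<in> set_tree B" "dep R v = Min (dep R ` set_tree B)"
  proof -
    have "set_tree B \<noteq> {}" using assms(8) by (cases B) auto
    hence "Min (dep R ` set_tree B) \<in> dep R ` set_tree B" by (intro Min_in) auto
    thus ?thesis using that by auto
  qed
  have du: "int (dep R u) = mu R t" using u eq unfolding mu_def by simp
  have dv: "int (dep R v) = mu R t" using v eq unfolding mu_def by simp
  have "u \<noteq> v" using u v assms(6) by auto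
  have duv: "dep R u = dep R v" using du dv by simp
  have S: "u \<in> set_tree t" "v \<in> set_tree t" using u v assms(4,5) by auto
  have "\<exists>w\<in>set_tree t \<inter> set_tree R. dep R w < dep R u"
  proof (cases "u < v")
    case True
    then show ?thesis using uniq[OF assms(1,2) S] S assms(3) du dv by auto
  next
    case False
    hence "v < u" using \<open>u \<noteq> v\<close> by auto
    then show ?thesis using uniq[OF assms(1,2) S(2) S(1)] S assms(3) duv by auto
  qed
  then obtain w where "w \<in> set_tree t" "dep R w < dep R u" by auto
  hence "int (dep R w) < mu R t" using du by simp
  moreover have "mu R t \<le> int (dep R w)" unfolding mu_def using \<open>w \<in> set_tree t\<close> by simp
  ultimately show False by linarith
qed

lemma conv_sub:
  assumes "bst (Node l a r)" "conv R (set_tree (Node l a r))"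
  shows "conv R (set_tree l)" "conv R (set_tree r)"
proof -
  have B: "\<forall>x\<in>set_tree l. x < a" "\<forall>x\<in>set_tree r. a < x" using assms(1) by auto
  show "conv R (set_tree l)"
    unfolding conv_def
  proof (intro ballI impI)
    fix u v w assume h: "u \<in> set_tree l" "v \<in> set_tree l" "w \<in> set_tree R" "u < w \<and> w < v"
    have "w \<in> set_tree (Node l a r)" using assms(2) h unfolding conv_def tree.set by blast
    hence "w \<in> set_tree l \<or> w = a \<or> w \<in> set_tree r" unfolding tree.set by blast
    then show "w \<in> set_tree l" using B h by (meson less_asym less_trans)
  qed
  show "conv R (set_tree r)"
    unfolding conv_def
  proof (intro ballI impI)
    fix u v w assume h: "u \<in> set_tree r" "v \<in> set_tree r" "w \<in> set_tree R" "u < w \<and> w < v"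
    have "w \<in> set_tree (Node l a r)" using assms(2) h unfolding conv_def tree.set by blast
    hence "w \<in> set_tree l \<or> w = a \<or> w \<in> set_tree r" unfolding tree.set by blast
    then show "w \<in> set_tree r" using B h by (meson less_asym less_trans)
  qed
qed

lemma bst_zz1: "set_tree A \<union> {x} \<union> set_tree B = set_tree ll \<Longrightarrow> bst (Node A x B)
  \<Longrightarrow> bst (Node (Node ll b lr) a r) \<Longrightarrow>
   bst (Node A x (Node B b (Node lr a r)))"
  apply (simp add: set_eq_iff)
  by (smt (verit) Un_iff dual_order.strict_trans insert_iff)
lemma bst_zg1: "set_tree A \<union> {x} \<union> set_tree B = set_tree lr \<Longrightarrow> bst (Node A x B)
  \<Longrightarrow> bst (Node (Node ll b lr) a r) \<Longrightarrow>
   bst (Node (Node ll b A) x (Node B a r))"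
  apply (simp add: set_eq_iff)
  by (smt (verit) Un_iff dual_order.strict_trans insert_iff)
lemma bst_zz2: "set_tree A \<union> {x} \<union> set_tree B = set_tree rr \<Longrightarrow> bst (Node A x B)
  \<Longrightarrow> bst (Node l a (Node rl b rr)) \<Longrightarrow>
   bst (Node (Node (Node l a rl) b A) x B)"
  apply (simp add: set_eq_iff)
  by (smt (verit) Un_iff dual_order.strict_trans insert_iff)
lemma bst_zg2: "set_tree A \<union> {x} \<union> set_tree B = set_tree rl \<Longrightarrow> bst (Node A x B)
  \<Longrightarrow> bst (Node l a (Node rl b rr)) \<Longrightarrow>
   bst (Node (Node l a A) x (Node B b rr))"
  apply (simp add: set_eq_iff)
  by (smt (verit) Un_iff dual_order.strict_trans insert_iff)
lemma bst_z1: "set_tree A \<union> {x} \<union> set_tree B = set_tree l \<Longrightarrow> bst (Node A x B)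
  \<Longrightarrow> bst (Node l a r) \<Longrightarrow>
   bst (Node A x (Node B a r))"
  apply (simp add: set_eq_iff)
  by (smt (verit) Un_iff dual_order.strict_trans insert_iff)
lemma bst_z2: "set_tree A \<union> {x} \<union> set_tree B = set_tree r \<Longrightarrow> bst (Node A x B)
  \<Longrightarrow> bst (Node l a r) \<Longrightarrow>
   bst (Node (Node l a A) x B)"
  apply (simp add: set_eq_iff)
  by (smt (verit) Un_iff dual_order.strict_trans insert_iff)
lemma struct:
  "bst t \<Longrightarrow> x \<in> set_tree t \<Longrightarrow> even (dep t x) \<Longrightarrow>
   (\<exists>A B. splay_even x t = Node A x B) \<and> set_tree (splay_even x t) = set_tree t \<and> bst (splay_even x t)"
proof (induction x t rule: splay_even.induct)
  case (1 x)
  then show ?case by simp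
next
  case (2 x l a r)
  show ?case
  proof (cases "x = a")
    case True
    then show ?thesis using 2 by simp
  next
    case xa: False
    show ?thesis
    proof (cases "x < a")
      case True
      then obtain ll b lr where l: "l = Node ll b lr" using 2 by (cases l) auto
      have xb: "x \<noteq> b" using 2(5-7) True l xa by auto
      show ?thesis
      proof (cases "x < b")
        case xlb: True
        have p: "bst ll" "x \<in> set_tree ll" "even (dep ll x)" using 2(5-7) True l xa xb xlb by auto
        from 2(1)[OF xa True l xb xlb p]
        obtain A B where AB: "splay_even x ll = Node A x B" "set_tree A \<union> {x} \<union> set_tree B = set_tree ll" "bst (Node A x B)"
          by auto
        have e: "splay_even x (Node l a r) = Node A x (Node B b (Node lr a r))" using AB True xlb xa xb l by simp
        have s: "set_tree (Node A x (Node B b (Node lr a r))) = set_tree (Node l a r)" using AB(2) l by auto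
        have b: "bst (splay_even x (Node l a r))" unfolding e by (rule bst_zz1[OF AB(2,3) 2(5)[unfolded l]])
        show ?thesis unfolding e using s b[unfolded e] by (intro conjI exI) (rule refl, assumption+)
      next
        case xlb: False
        have p: "bst lr" "x \<in> set_tree lr" "even (dep lr x)" using 2(5-7) True l xa xb xlb by auto
        from 2(2)[OF xa True l xb xlb p]
        obtain A B where AB: "splay_even x lr = Node A x B" "set_tree A \<union> {x} \<union> set_tree B = set_tree lr" "bst (Node A x B)"
          by auto
        have e: "splay_even x (Node l a r) = Node (Node ll b A) x (Node B a r)" using AB True xlb xa xb l by simp
        have s: "set_tree (Node (Node ll b A) x (Node B a r)) = set_tree (Node l a r)" using AB(2) l by auto
        have b: "bst (splay_even x (Node l a r))" unfolding e by (rule bst_zg1[OF AB(2,3) 2(5)[unfolded l]])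
        show ?thesis unfolding e using s b[unfolded e] by (intro conjI exI) (rule refl, assumption+)
      qed
    next
      case False
      then obtain rl b rr where r: "r = Node rl b rr" using 2 xa by (cases r) auto
      have xb: "x \<noteq> b" using 2(5-7) False r xa by auto
      show ?thesis
      proof (cases "b < x")
        case xlb: True
        have p: "bst rr" "x \<in> set_tree rr" "even (dep rr x)" using 2(5-7) False r xa xb xlb by auto
        from 2(3)[OF xa False r xb xlb p]
        obtain A B where AB: "splay_even x rr = Node A x B" "set_tree A \<union> {x} \<union> set_tree B = set_tree rr" "bst (Node A x B)"
          by auto
        have e: "splay_even x (Node l a r) = Node (Node (Node l a rl) b A) x B" using AB False xlb xa xb r by simp
        have s: "set_tree (Node (Node (Node l a rl) b A) x B) = set_tree (Node l a r)" using AB(2) r by auto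
        have b: "bst (splay_even x (Node l a r))" unfolding e by (rule bst_zz2[OF AB(2,3) 2(5)[unfolded r]])
        show ?thesis unfolding e using s b[unfolded e] by (intro conjI exI) (rule refl, assumption+)
      next
        case xlb: False
        have p: "bst rl" "x \<in> set_tree rl" "even (dep rl x)" using 2(5-7) False r xa xb xlb by auto
        from 2(4)[OF xa False r xb xlb p]
        obtain A B where AB: "splay_even x rl = Node A x B" "set_tree A \<union> {x} \<union> set_tree B = set_tree rl" "bst (Node A x B)"
          by auto
        have e: "splay_even x (Node l a r) = Node (Node l a A) x (Node B b rr)" using AB False xlb xa xb r by simp
        have s: "set_tree (Node (Node l a A) x (Node B b rr)) = set_tree (Node l a r)" using AB(2) r by auto
        have b: "bst (splay_even x (Node l a r))" unfolding e by (rule bst_zg2[OF AB(2,3) 2(5)[unfolded r]])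
        show ?thesis unfolding e using s b[unfolded e] by (intro conjI exI) (rule refl, assumption+)
      qed
    qed
  qed
qed

lemma disj_zz2: "bst (Node l a (Node rl b rr)) \<Longrightarrow> set_tree rr \<inter> set_tree (Node l a rl) = {}"
  by (auto; meson less_asym less_trans)

lemma disj_bst: "bst (Node L y M) \<Longrightarrow> set_tree L \<inter> set_tree M = {}"
  by force

lemma conv_sub2:
  assumes "bst t" "conv R (set_tree t)" "t = Node l a r"
  shows "conv R (set_tree l)" "conv R (set_tree r)"
  using conv_sub assms by auto

lemma subtr_l: "x < a \<Longrightarrow> subtr (Node l a r) x = subtr l x" by simp
lemma subtr_r: "a < x \<Longrightarrow> subtr (Node l a r) x = subtr r x" by simp

lemma amort:
  "bst t \<Longrightarrow> x \<in> set_tree t \<Longrightarrow> even (dep t x) \<Longrightarrow> bst R \<Longrightarrow> conv R (set_tree t) \<Longrightarrow>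
   set_tree t \<subseteq> set_tree R \<Longrightarrow>
   int (dep t x) + pot R (splay_even x t) - pot R t \<le> 6 * (mu R (subtr t x) - mu R t)"
proof (induction x t rule: splay_even.induct)
  case (1 x)
  then show ?case by simp
next
  case (2 x l a r)
  let ?t = "Node l a r"
  have cv: "conv R (set_tree l)" "conv R (set_tree r)" using conv_sub 2(5,9) by auto
  show ?case
  proof (cases "x = a")
    case True
    then show ?thesis by simp
  next
    case xa: False
    show ?thesis
    proof (cases "x < a")
      case True
      then obtain ll b lr where l: "l = Node ll b lr" using 2(5,6) True xa by (cases l) auto
      have xb: "x \<noteq> b" using 2(5-7) True l xa by auto
      have cvl: "conv R (set_tree ll)" "conv R (set_tree lr)" using conv_sub[of ll b lr R] cv(1) 2(5) l by auto
      show ?thesis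
      proof (cases "x < b")
        case xlb: True
        have p: "bst ll" "x \<in> set_tree ll" "even (dep ll x)" using 2(5-7) True l xa xb xlb by auto
        from struct[OF p]
        obtain A B where AB: "splay_even x ll = Node A x B" "set_tree A \<union> {x} \<union> set_tree B = set_tree ll" "bst (Node A x B)"
          by auto
        have IH: "int (dep ll x) + pot R (splay_even x ll) - pot R ll \<le> 6 * (mu R (subtr ll x) - mu R ll)"
          using 2(1)[OF xa True l xb xlb p 2(8) cvl(1)] 2(10) l by auto
        have e: "splay_even x ?t = Node A x (Node B b (Node lr a r))" using AB True xlb xa xb l by simp
        have d: "dep ?t x = Suc (Suc (dep ll x))" using True xlb l by simp
        have sb: "subtr ?t x = subtr ll x" using True xlb l by simp
        have m1: "mu R (Node A x (Node B b (Node lr a r))) = mu R ?t" by (rule mu_set) (use AB(2) l in auto)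
        have m2: "mu R (Node A x B) = mu R ll" by (rule mu_set) (use AB(2) in auto)
        have i1: "mu R ?t \<le> mu R l" by (rule mu_mono) (use l in auto)
        have i2: "mu R l \<le> mu R ll" by (rule mu_mono) (use l p(2) in auto)
        have i3: "mu R ?t \<le> mu R (Node B b (Node lr a r))" by (rule mu_mono) (use AB(2) l in auto)
        have i4: "mu R ?t \<le> mu R (Node lr a r)" by (rule mu_mono) (use l in auto)
        have sp: "mu R ?t < mu R ll \<or> mu R ?t < mu R (Node lr a r)"
        proof (rule mu_split[OF 2(8,9,10)])
          have B: "\<forall>x\<in>set_tree ll. x < b" "\<forall>x\<in>set_tree lr. b < x" "b < a" "\<forall>x\<in>set_tree ll. x < a" "\<forall>x\<in>set_tree r. a < x"
            using 2(5) l by auto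
          show "set_tree ll \<inter> set_tree (Node lr a r) = {}"
          proof (rule ccontr)
            assume "set_tree ll \<inter> set_tree (Node lr a r) \<noteq> {}"
            then obtain y where y: "y \<in> set_tree ll" "y \<in> set_tree (Node lr a r)" by blast
            have yb: "y < b" "y < a" using B(1,4) y(1) by blast+
            have "y \<in> set_tree lr \<or> y = a \<or> y \<in> set_tree r" using y(2) unfolding tree.set by blast
            moreover have "y \<notin> set_tree lr" using B(2) yb(1) by (meson less_asym)
            moreover have "y \<notin> set_tree r" using B(5) yb(2) by (meson less_asym)
            ultimately show False using yb(2) by blast
          qed
        qed (use l p(2) in auto)
        show ?thesis using IH unfolding e d sb using AB(1) m1 m2 i1 i2 i3 i4 sp l by (simp; (elim disjE); linarith)
      next
        case xlb: False
        have p: "bst lr" "x \<in> set_tree lr" "even (dep lr x)" using 2(5-7) True l xa xb xlb by auto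
        from struct[OF p]
        obtain A B where AB: "splay_even x lr = Node A x B" "set_tree A \<union> {x} \<union> set_tree B = set_tree lr" "bst (Node A x B)"
          by auto
        have IH: "int (dep lr x) + pot R (splay_even x lr) - pot R lr \<le> 6 * (mu R (subtr lr x) - mu R lr)"
          using 2(2)[OF xa True l xb xlb p 2(8) cvl(2)] 2(10) l by auto
        have e: "splay_even x ?t = Node (Node ll b A) x (Node B a r)" using AB True xlb xa xb l by simp
        have d: "dep ?t x = Suc (Suc (dep lr x))" using True xlb xb l by simp
        have sb: "subtr ?t x = subtr lr x" using True xlb xb l by simp
        have m1: "mu R (Node (Node ll b A) x (Node B a r)) = mu R ?t" by (rule mu_set) (use AB(2) l in auto)
        have m2: "mu R (Node A x B) = mu R lr" by (rule mu_set) (use AB(2) in auto)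
        have i1: "mu R ?t \<le> mu R l" by (rule mu_mono) (use l in auto)
        have i2: "mu R l \<le> mu R lr" by (rule mu_mono) (use l p(2) in auto)
        have i3: "mu R ?t \<le> mu R (Node ll b A)" by (rule mu_mono) (use AB(2) l in auto)
        have i4: "mu R ?t \<le> mu R (Node B a r)" by (rule mu_mono) (use AB(2) l in auto)
        have sp: "mu R ?t < mu R (Node ll b A) \<or> mu R ?t < mu R (Node B a r)"
        proof (rule mu_split[OF 2(8,9,10)])
          show "set_tree (Node ll b A) \<inter> set_tree (Node B a r) = {}"
            by (rule disj_bst[OF bst_zg1[OF AB(2,3) 2(5)[unfolded l]]])
        qed (use l AB(2) in auto)
        show ?thesis using IH unfolding e d sb using AB(1) m1 m2 i1 i2 i3 i4 sp l by (simp; (elim disjE); linarith)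
      qed
    next
      case False
      hence xa': "a < x" using xa by auto
      then obtain rl b rr where r: "r = Node rl b rr" using 2(5,6) xa' by (cases r) auto
      have xb: "x \<noteq> b" using 2(5-7) False r xa by auto
      have cvr: "conv R (set_tree rl)" "conv R (set_tree rr)" using conv_sub[of rl b rr R] cv(2) 2(5) r by auto
      show ?thesis
      proof (cases "b < x")
        case xlb: True
        have p: "bst rr" "x \<in> set_tree rr" "even (dep rr x)" using 2(5-7) False r xa xb xlb by auto
        from struct[OF p]
        obtain A B where AB: "splay_even x rr = Node A x B" "set_tree A \<union> {x} \<union> set_tree B = set_tree rr" "bst (Node A x B)"
          by auto
        have IH: "int (dep rr x) + pot R (splay_even x rr) - pot R rr \<le> 6 * (mu R (subtr rr x) - mu R rr)"
          using 2(3)[OF xa False r xb xlb p 2(8) cvr(2)] 2(10) r by auto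
        have e: "splay_even x ?t = Node (Node (Node l a rl) b A) x B" using AB False xlb xa xb r by simp
        have d: "dep ?t x = Suc (Suc (dep rr x))" using xa' xlb r by simp
        have sb: "subtr ?t x = subtr rr x" using xa' xlb r by simp
        have m1: "mu R (Node (Node (Node l a rl) b A) x B) = mu R ?t" by (rule mu_set) (use AB(2) r in auto)
        have m2: "mu R (Node A x B) = mu R rr" by (rule mu_set) (use AB(2) in auto)
        have i1: "mu R ?t \<le> mu R r" by (rule mu_mono) (use r in auto)
        have i2: "mu R r \<le> mu R rr" by (rule mu_mono) (use r p(2) in auto)
        have i3: "mu R ?t \<le> mu R (Node (Node l a rl) b A)" by (rule mu_mono) (use AB(2) r in auto)
        have i4: "mu R ?t \<le> mu R (Node l a rl)" by (rule mu_mono) (use r in auto)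
        have sp: "mu R ?t < mu R rr \<or> mu R ?t < mu R (Node l a rl)"
        proof (rule mu_split[OF 2(8,9,10)])
          show "set_tree rr \<inter> set_tree (Node l a rl) = {}"
            by (rule disj_zz2[OF 2(5)[unfolded r]])
        qed (use r p(2) in auto)
        show ?thesis using IH unfolding e d sb using AB(1) m1 m2 i1 i2 i3 i4 sp r by (simp; (elim disjE); linarith)
      next
        case xlb: False
        have p: "bst rl" "x \<in> set_tree rl" "even (dep rl x)" using 2(5-7) False r xa xb xlb by auto
        from struct[OF p]
        obtain A B where AB: "splay_even x rl = Node A x B" "set_tree A \<union> {x} \<union> set_tree B = set_tree rl" "bst (Node A x B)"
          by auto
        have IH: "int (dep rl x) + pot R (splay_even x rl) - pot R rl \<le> 6 * (mu R (subtr rl x) - mu R rl)"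
          using 2(4)[OF xa False r xb xlb p 2(8) cvr(1)] 2(10) r by auto
        have e: "splay_even x ?t = Node (Node l a A) x (Node B b rr)" using AB False xlb xa xb r by simp
        have d: "dep ?t x = Suc (Suc (dep rl x))" using xa' xlb xb r by simp
        have sb: "subtr ?t x = subtr rl x" using xa' xlb xb r by simp
        have m1: "mu R (Node (Node l a A) x (Node B b rr)) = mu R ?t" by (rule mu_set) (use AB(2) r in auto)
        have m2: "mu R (Node A x B) = mu R rl" by (rule mu_set) (use AB(2) in auto)
        have i1: "mu R ?t \<le> mu R r" by (rule mu_mono) (use r in auto)
        have i2: "mu R r \<le> mu R rl" by (rule mu_mono) (use r p(2) in auto)
        have i3: "mu R ?t \<le> mu R (Node l a A)" by (rule mu_mono) (use AB(2) r in auto)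
        have i4: "mu R ?t \<le> mu R (Node B b rr)" by (rule mu_mono) (use AB(2) r in auto)
        have sp: "mu R ?t < mu R (Node l a A) \<or> mu R ?t < mu R (Node B b rr)"
        proof (rule mu_split[OF 2(8,9,10)])
          show "set_tree (Node l a A) \<inter> set_tree (Node B b rr) = {}"
            by (rule disj_bst[OF bst_zg2[OF AB(2,3) 2(5)[unfolded r]]])
        qed (use r AB(2) in auto)
        show ?thesis using IH unfolding e d sb using AB(1) m1 m2 i1 i2 i3 i4 sp r by (simp; (elim disjE); linarith)
      qed
    qed
  qed
qed

lemma sum_pot:
  "bst t \<Longrightarrow> (\<Sum>i\<in>set_tree t. - 2 * int (Min (dep R ` set_tree (subtr t i)))) = pot R t"
proof (induction t)
  case Leaf
  then show ?case by simp
next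
  case (Node l a r)
  let ?g = "\<lambda>s. - 2 * int (Min (dep R ` set_tree s))"
  have B: "bst l" "bst r" "\<forall>x\<in>set_tree l. x < a" "\<forall>x\<in>set_tree r. a < x" using Node.prems by auto
  have na: "a \<notin> set_tree l \<union> set_tree r" using B(3,4) by blast
  have dj: "set_tree l \<inter> set_tree r = {}" using B(3,4) by (meson disjoint_iff less_asym)
  have sl: "(\<Sum>i\<in>set_tree l. ?g (subtr (Node l a r) i)) = (\<Sum>i\<in>set_tree l. ?g (subtr l i))"
    by (rule sum.cong) (use B(3) in auto)
  have sr: "(\<Sum>i\<in>set_tree r. ?g (subtr (Node l a r) i)) = (\<Sum>i\<in>set_tree r. ?g (subtr r i))"
    by (rule sum.cong) (use B(4) in auto)
  have "(\<Sum>i\<in>set_tree (Node l a r). ?g (subtr (Node l a r) i))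
      = ?g (subtr (Node l a r) a) + ((\<Sum>i\<in>set_tree l. ?g (subtr (Node l a r) i)) + (\<Sum>i\<in>set_tree r. ?g (subtr (Node l a r) i)))"
    using na dj by (simp add: sum.union_disjoint)
  also have "\<dots> = ?g (Node l a r) + (pot R l + pot R r)"
    using sl sr Node.IH B(1,2) by simp
  also have "\<dots> = pot R (Node l a r)" by (simp add: mu_def)
  finally show ?case .
qed

lemma subtr_in: "bst t \<Longrightarrow> x \<in> set_tree t \<Longrightarrow> x \<in> set_tree (subtr t x)"
  by (induction t) auto

lemma subtr_sub: "set_tree (subtr t x) \<subseteq> set_tree t"
  by (induction t) auto

lemma conv_self: "conv R (set_tree R)"
  unfolding conv_def by blast

lemma splay_main:
  assumes "bst T" "x \<in> set_tree T" "bst R" "conv R (set_tree T)" "set_tree T \<subseteq> set_tree R"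
  shows "bst (splay x T) \<and> set_tree (splay x T) = set_tree T \<and>
    int (dep T x) + pot R (splay x T) - pot R T \<le> 6 * (mu R (subtr T x) - mu R T) + 1"
proof (cases "even (dep T x)")
  case True
  have e: "splay x T = splay_even x T" unfolding splay_def using True by simp
  show ?thesis unfolding e using struct[OF assms(1,2) True] amort[OF assms(1,2) True assms(3,4,5)] by simp
next
  case odd: False
  obtain l a r where T: "T = Node l a r" using assms(2) by (cases T) auto
  have xa: "x \<noteq> a" using odd T by auto
  have cv: "conv R (set_tree l)" "conv R (set_tree r)" using conv_sub assms(1,4) T by auto
  show ?thesis
  proof (cases "x < a")
    case True
    have p: "bst l" "x \<in> set_tree l" "even (dep l x)" using assms(1,2) odd T True xa by auto
    obtain A B where AB: "splay_even x l = Node A x B" "set_tree A \<union> {x} \<union> set_tree B = set_tree l" "bst (Node A x B)"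
      using struct[OF p] by auto
    have IH: "int (dep l x) + pot R (splay_even x l) - pot R l \<le> 6 * (mu R (subtr l x) - mu R l)"
      using amort[OF p assms(3) cv(1)] assms(5) T by auto
    have e: "splay x T = Node A x (Node B a r)" unfolding splay_def using odd T True AB(1) by simp
    have d: "dep T x = Suc (dep l x)" using T True by simp
    have sb: "subtr T x = subtr l x" using T True by simp
    have m1: "mu R (Node A x (Node B a r)) = mu R T" by (rule mu_set) (use AB(2) T in auto)
    have m2: "mu R (Node A x B) = mu R l" by (rule mu_set) (use AB(2) in auto)
    have i1: "mu R T \<le> mu R l" by (rule mu_mono) (use T p(2) in auto)
    have i2: "mu R T \<le> mu R (Node B a r)" by (rule mu_mono) (use AB(2) T in auto)
    have i3: "mu R l \<le> mu R (subtr l x)" by (rule mu_mono) (use subtr_in[OF p(1,2)] subtr_sub[of l x] subtr_sub[of r x] in auto)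
    have b: "bst (Node A x (Node B a r))" by (rule bst_z1[OF AB(2,3) assms(1)[unfolded T]])
    have s: "set_tree (Node A x (Node B a r)) = set_tree T" using AB(2) T by auto
    have "int (dep T x) + pot R (splay x T) - pot R T \<le> 6 * (mu R (subtr T x) - mu R T) + 1"
      using IH unfolding e d sb using AB(1) m1 m2 i1 i2 i3 T by simp
    then show ?thesis using b s unfolding e by blast
  next
    case False
    hence xa': "a < x" using xa by auto
    have p: "bst r" "x \<in> set_tree r" "even (dep r x)" using assms(1,2) odd T xa' xa by auto
    obtain A B where AB: "splay_even x r = Node A x B" "set_tree A \<union> {x} \<union> set_tree B = set_tree r" "bst (Node A x B)"
      using struct[OF p] by auto
    have IH: "int (dep r x) + pot R (splay_even x r) - pot R r \<le> 6 * (mu R (subtr r x) - mu R r)"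
      using amort[OF p assms(3) cv(2)] assms(5) T by auto
    have e: "splay x T = Node (Node l a A) x B" unfolding splay_def using odd T xa' AB(1) by simp
    have d: "dep T x = Suc (dep r x)" using T xa' by simp
    have sb: "subtr T x = subtr r x" using T xa' by simp
    have m1: "mu R (Node (Node l a A) x B) = mu R T" by (rule mu_set) (use AB(2) T in auto)
    have m2: "mu R (Node A x B) = mu R r" by (rule mu_set) (use AB(2) in auto)
    have i1: "mu R T \<le> mu R r" by (rule mu_mono) (use T p(2) in auto)
    have i2: "mu R T \<le> mu R (Node l a A)" by (rule mu_mono) (use AB(2) T in auto)
    have i3: "mu R r \<le> mu R (subtr r x)" by (rule mu_mono) (use subtr_in[OF p(1,2)] subtr_sub[of l x] subtr_sub[of r x] in auto)
    have b: "bst (Node (Node l a A) x B)" by (rule bst_z2[OF AB(2,3) assms(1)[unfolded T]])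
    have s: "set_tree (Node (Node l a A) x B) = set_tree T" using AB(2) T by auto
    have "int (dep T x) + pot R (splay x T) - pot R T \<le> 6 * (mu R (subtr T x) - mu R T) + 1"
      using IH unfolding e d sb using AB(1) m1 m2 i1 i2 i3 T by simp
    then show ?thesis using b s unfolding e by blast
  qed
qed

theorem mainTheorem8:
  shows "\<exists>c::real. \<forall>(n::nat) R T (i::nat).
           bst_on n R \<longrightarrow> bst_on n T \<longrightarrow> i \<in> {1..n} \<longrightarrow>
           real (splay_cost i T) + real_of_int (phi n R (splay i T)) - real_of_int (phi n R T)
             \<le> c * (1 + real (dep R i))"
proof (intro exI[of _ 7] allI impI)
  fix n R T i
  assume hR: "bst_on n R" and hT: "bst_on n T" and hi: "i \<in> {1..n}"
  have bR: "bst R" "set_tree R = {1..n}" using hR unfolding bst_on_def by auto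
  have bT: "bst T" "set_tree T = {1..n}" using hT unfolding bst_on_def by auto
  have iT: "i \<in> set_tree T" using hi bT(2) by simp
  have cv: "conv R (set_tree T)" using conv_self[of R] bR(2) bT(2) by simp
  have sub: "set_tree T \<subseteq> set_tree R" using bR(2) bT(2) by simp
  note M = splay_main[OF bT(1) iT bR(1) cv sub]
  have p1: "phi n R T = pot R T"
    unfolding phi_def using sum_pot[OF bT(1), of R] bT(2) by simp
  have p2: "phi n R (splay i T) = pot R (splay i T)"
    unfolding phi_def using sum_pot[of "splay i T" R] M bT(2) by simp
  have m1: "mu R (subtr T i) \<le> int (dep R i)"
    unfolding mu_def using subtr_in[OF bT(1) iT] by simp
  have m0: "0 \<le> mu R T" by (rule mu_nonneg)
  have H: "int (dep T i) + pot R (splay i T) - pot R T \<le> 7 * (1 + int (dep R i))"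
    using M[THEN conjunct2, THEN conjunct2] m1 m0 of_nat_0_le_iff[of "dep R i"] by (smt (verit))
  have "real_of_int (int (dep T i) + pot R (splay i T) - pot R T) \<le> real_of_int (7 * (1 + int (dep R i)))"
    using H by (simp only: of_int_le_iff)
  then show "real (splay_cost i T) + real_of_int (phi n R (splay i T)) - real_of_int (phi n R T)
             \<le> 7 * (1 + real (dep R i))"
    unfolding splay_cost_def p1 p2 by simp
qed

end
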